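(* Let $A\in M_n$ and $c\in\mathbb{R}^n$. If $\alpha$ is a sharp point of $W_c(A)$, then $\alpha$ is a $c$-value of $A$.
   Context: $M_n$ denotes the space of $n\times n$ complex matrices. The $c$-numerical range of $A\in M_n$ is $W_c(A)=\{\sum_{j=1}^n c_jx_j^*Ax_j:\ x_1,\dots,x_n\in\mathbb{C}^n\text{ orthonormal}\}$, a compact convex set. A sharp point of $W_c(A)$ is a point $\alpha\in\partial W_c(A)$ through which pass at least two distinct supporting lines of $W_c(A)$. Let $\lambda_1(A),\dots,\lambda_n(A)$ be the eigenvalues of $A$ with algebraic multiplicity and $i_1<\dots<i_r$ the indices with $c_{i_s}\neq0$. A $c$-value of $A$ is a number $\sum_{s=1}^r c_{i_s}\lambda_{j_s}(A)$ with $j_1,\dots,j_r\in\{1,\dots,n\}$ pairwise distinct. *)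

theory Defs
  imports "HOL-Analysis.Elementary_Topology" "Jordan_Normal_Form.Char_Poly"
begin

text \<open>Vectors of C^n are represented as functions nat => complex (entries with index < n);
  a family x_1..x_n of vectors is a function nat => nat => complex (x j i = i-th entry of x_j).\<close>

definition quad_form :: "nat \<Rightarrow> complex mat \<Rightarrow> (nat \<Rightarrow> complex) \<Rightarrow> complex" where
  "quad_form n A x = (\<Sum>i<n. \<Sum>k<n. cnj (x i) * A $$ (i, k) * x k)"

definition orthonormal_family :: "nat \<Rightarrow> (nat \<Rightarrow> nat \<Rightarrow> complex) \<Rightarrow> bool" where
  "orthonormal_family n x \<longleftrightarrow>
     (\<forall>j<n. \<forall>l<n. (\<Sum>i<n. cnj (x j i) * x l i) = (if j = l then 1 else 0))"

definition c_numerical_range :: "nat \<Rightarrow> (nat \<Rightarrow> real) \<Rightarrow> complex mat \<Rightarrow> complex set" where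
  "c_numerical_range n c A =
     {\<Sum>j<n. complex_of_real (c j) * quad_form n A (x j) | x. orthonormal_family n x}"

definition supporting_line_at :: "complex set \<Rightarrow> complex \<Rightarrow> complex set \<Rightarrow> bool" where
  "supporting_line_at S \<alpha> L \<longleftrightarrow> \<alpha> \<in> L \<and>
     (\<exists>u t. u \<noteq> 0 \<and> L = {z. Re (cnj u * z) = t} \<and> (\<forall>z\<in>S. Re (cnj u * z) \<le> t))"

definition sharp_point :: "complex set \<Rightarrow> complex \<Rightarrow> bool" where
  "sharp_point S \<alpha> \<longleftrightarrow> \<alpha> \<in> frontier S \<and>
     (\<exists>L1 L2. L1 \<noteq> L2 \<and> supporting_line_at S \<alpha> L1 \<and> supporting_line_at S \<alpha> L2)"

text \<open>Eigenvalues with algebraic multiplicity: a list ls of length n with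
  char_poly A = prod (X - lambda). c-value: sum over indices i with c i nonzero of
  c i * ls ! (sigma i), sigma injective into the indices < n.\<close>
definition c_value :: "nat \<Rightarrow> (nat \<Rightarrow> real) \<Rightarrow> complex mat \<Rightarrow> complex \<Rightarrow> bool" where
  "c_value n c A \<alpha> \<longleftrightarrow> (\<exists>ls \<sigma>. length ls = n \<and> char_poly A = (\<Prod>a\<leftarrow>ls. [:- a, 1:]) \<and>
     inj_on \<sigma> {i. i < n \<and> c i \<noteq> 0} \<and> \<sigma> ` {i. i < n \<and> c i \<noteq> 0} \<subseteq> {..<n} \<and>
     \<alpha> = (\<Sum>i\<in>{i. i < n \<and> c i \<noteq> 0}. complex_of_real (c i) * ls ! \<sigma> i))"

end

theory Submission imports Defs "Jordan_Normal_Form.Schur_Decomposition"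
begin

definition ip :: "nat \<Rightarrow> (nat \<Rightarrow> complex) \<Rightarrow> (nat \<Rightarrow> complex) \<Rightarrow> complex" where
  "ip n v w = (\<Sum>i<n. cnj (v i) * w i)"

definition lc :: "complex \<Rightarrow> complex \<Rightarrow> (nat \<Rightarrow> complex) \<Rightarrow> (nat \<Rightarrow> complex) \<Rightarrow> nat \<Rightarrow> complex" where
  "lc p q v w = (\<lambda>i. p * v i + q * w i)"

lemma ip_lin_left: "ip n (lc p q v w) z = cnj p * ip n v z + cnj q * ip n w z"
  by (simp add: lc_def ip_def sum_distrib_left sum.distrib algebra_simps)

lemma ip_lin_right: "ip n z (lc p q v w) = p * ip n z v + q * ip n z w"
  by (simp add: lc_def ip_def sum_distrib_left sum.distrib algebra_simps)

lemma orth_ip: "orthonormal_family n x \<longleftrightarrow> (\<forall>j<n. \<forall>l<n. ip n (x j) (x l) = (if j = l then 1 else 0))"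
  by (simp add: orthonormal_family_def ip_def)

definition bf :: "nat \<Rightarrow> complex mat \<Rightarrow> (nat \<Rightarrow> complex) \<Rightarrow> (nat \<Rightarrow> complex) \<Rightarrow> complex" where
  "bf n A v w = (\<Sum>i<n. \<Sum>k<n. cnj (v i) * A $$ (i, k) * w k)"

lemma bf_lin_left: "bf n A (lc p q v w) z = cnj p * bf n A v z + cnj q * bf n A w z"
  by (simp add: lc_def bf_def sum_distrib_left sum.distrib algebra_simps)

lemma bf_lin_right: "bf n A z (lc p q v w) = p * bf n A z v + q * bf n A z w"
  by (simp add: lc_def bf_def sum_distrib_left sum.distrib algebra_simps)

lemma qf_bf: "quad_form n A v = bf n A v v"
  by (simp add: quad_form_def bf_def)

definition rot :: "(nat \<Rightarrow> nat \<Rightarrow> complex) \<Rightarrow> nat \<Rightarrow> nat \<Rightarrow> real \<Rightarrow> real \<Rightarrow> complex \<Rightarrow> nat \<Rightarrow> nat \<Rightarrow> complex" where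
  "rot x j k a s w = (\<lambda>l. if l = j then lc (complex_of_real a) (complex_of_real s * w) (x j) (x k)
     else if l = k then lc (- complex_of_real s * cnj w) (complex_of_real a) (x j) (x k) else x l)"

lemma rot_orth:
  assumes x: "orthonormal_family n x" and jk: "j < n" "k < n" "j \<noteq> k"
    and as: "a^2 + s^2 = 1" and w: "cnj w * w = 1"
  shows "orthonormal_family n (rot x j k a s w)"
proof -
  have X: "\<And>p q. p < n \<Longrightarrow> q < n \<Longrightarrow> ip n (x p) (x q) = (if p = q then 1 else 0)"
    using x by (simp add: orth_ip)
  have w': "w * cnj w = 1" using w by (simp add: mult.commute)
  have w2: "\<And>z. w * (cnj w * z) = z" using w' by (metis mult.assoc mult_1)
  have as': "complex_of_real a * complex_of_real a + complex_of_real s * complex_of_real s = 1"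
    using as by (metis of_real_add of_real_mult of_real_1 power2_eq_square)
  show ?thesis unfolding orth_ip
  proof (intro allI impI)
    fix p q assume p: "p < n" and q: "q < n"
    show "ip n (rot x j k a s w p) (rot x j k a s w q) = (if p = q then 1 else 0)"
      using jk p q X[OF p q]
      apply (simp add: rot_def ip_lin_left ip_lin_right)
      apply (auto simp: X algebra_simps w w' w2 as')
      done
  qed
qed

lemma rot_value:
  assumes jk: "j < n" "k < n" "j \<noteq> k"
    and as: "a^2 + s^2 = 1" and w: "cnj w * w = 1"
  shows "(\<Sum>l<n. complex_of_real (c l) * quad_form n A (rot x j k a s w l))
    = (\<Sum>l<n. complex_of_real (c l) * quad_form n A (x l))
      + complex_of_real (c j - c k) * (complex_of_real (s^2) * (bf n A (x k) (x k) - bf n A (x j) (x j))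
         + complex_of_real (a*s) * (w * bf n A (x j) (x k) + cnj w * bf n A (x k) (x j)))"
proof -
  have w': "w * cnj w = 1" using w by (simp add: mult.commute)
  have w2: "\<And>z. w * (cnj w * z) = z" using w' by (metis mult.assoc mult_1)
  have w3: "\<And>z. cnj w * (w * z) = z" using w by (metis mult.assoc mult_1)
  have as': "complex_of_real a * complex_of_real a = 1 - complex_of_real s * complex_of_real s"
    using as by (metis add_diff_cancel_right' of_real_add of_real_mult of_real_1 power2_eq_square)
  have "(\<Sum>l<n. complex_of_real (c l) * quad_form n A (rot x j k a s w l))
      - (\<Sum>l<n. complex_of_real (c l) * quad_form n A (x l))
      = (\<Sum>l<n. complex_of_real (c l) * (quad_form n A (rot x j k a s w l) - quad_form n A (x l)))"
    by (simp add: sum_subtractf algebra_simps)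
  also have "\<dots> = (\<Sum>l\<in>{j,k}. complex_of_real (c l) * (quad_form n A (rot x j k a s w l) - quad_form n A (x l)))"
  proof (rule sum.mono_neutral_left[symmetric])
    show "finite {..<n}" by simp
    show "{j, k} \<subseteq> {..<n}" using jk by auto
    show "\<forall>i\<in>{..<n} - {j, k}. complex_of_real (c i) * (quad_form n A (rot x j k a s w i) - quad_form n A (x i)) = 0"
    proof
      fix i assume "i \<in> {..<n} - {j, k}"
      then have "i \<noteq> j" "i \<noteq> k" by auto
      then have "rot x j k a s w i = x i" by (simp add: rot_def)
      then show "complex_of_real (c i) * (quad_form n A (rot x j k a s w i) - quad_form n A (x i)) = 0" by simp
    qed
  qed
  also have "\<dots> = complex_of_real (c j) * (quad_form n A (rot x j k a s w j) - quad_form n A (x j))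
     + complex_of_real (c k) * (quad_form n A (rot x j k a s w k) - quad_form n A (x k))"
    using jk by simp
  also have "\<dots> = complex_of_real (c j - c k) * (complex_of_real (s^2) * (bf n A (x k) (x k) - bf n A (x j) (x j))
         + complex_of_real (a*s) * (w * bf n A (x j) (x k) + cnj w * bf n A (x k) (x j)))"
  proof -
    let ?ar = "complex_of_real a" and ?sr = "complex_of_real s"
    have E1: "quad_form n A (rot x j k a s w j) = (?ar*?ar) * bf n A (x j) (x j)
       + ?ar*?sr*(w * bf n A (x j) (x k) + cnj w * bf n A (x k) (x j)) + ?sr*?sr*(w*cnj w)*bf n A (x k) (x k)"
      using jk apply (simp add: rot_def qf_bf bf_lin_left bf_lin_right)
      apply (simp add: distrib_left distrib_right right_diff_distrib left_diff_distrib)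
      done
    have E2: "quad_form n A (rot x j k a s w k) = (?ar*?ar) * bf n A (x k) (x k)
       - ?ar*?sr*(w * bf n A (x j) (x k) + cnj w * bf n A (x k) (x j)) + ?sr*?sr*(w*cnj w)*bf n A (x j) (x j)"
      using jk apply (simp add: rot_def qf_bf bf_lin_left bf_lin_right)
      apply (simp add: distrib_left distrib_right right_diff_distrib left_diff_distrib)
      done
    show ?thesis unfolding E1 E2 w' as' by (simp add: qf_bf algebra_simps power2_eq_square)
  qed
  finally show ?thesis by (simp add: algebra_simps)
qed

lemma real_stat:
  fixes P Q :: real
  assumes H: "\<And>a s. a^2 + s^2 = 1 \<Longrightarrow> s^2 * Q + a * s * P \<le> 0"
  shows "P = 0"
proof (rule ccontr)
  assume P: "P \<noteq> 0"
  define d where "d = 1 / (4 * \<bar>Q\<bar> + 2 * P^2 + 1)"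
  have dd: "4 * \<bar>Q\<bar> + 2 * P^2 + 1 > 0"
    using abs_ge_zero[of Q] zero_le_power2[of P] by linarith
  have dpos: "d > 0" unfolding d_def using dd by simp
  have d1: "d * (4 * \<bar>Q\<bar> + 2 * P^2 + 1) = 1" unfolding d_def using dd by simp
  define t where "t = d * P"
  have den: "1 + t^2 > 0" by (simp add: add_pos_nonneg)
  define a where "a = (1 - t^2) / (1 + t^2)"
  define s where "s = 2 * t / (1 + t^2)"
  have id: "(1 - t^2)^2 + (2*t)^2 = (1+t^2)^2" by (simp add: algebra_simps power2_eq_square)
  have as: "a^2 + s^2 = 1" unfolding a_def s_def using den id
    by (simp add: power_divide add_divide_distrib[symmetric])
  have s2: "s^2 = (4*t^2) / (1+t^2)^2" unfolding s_def by (simp add: power_divide power_mult_distrib)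
  have as2: "a*s = (2*t*(1-t^2)) / (1+t^2)^2" unfolding a_def s_def by (simp add: power2_eq_square)
  have eq: "s^2 * Q + a * s * P = (4 * t^2 * Q + 2 * t * (1 - t^2) * P) / (1 + t^2)^2"
    unfolding s2 as2 by (simp add: add_divide_distrib)
  have k1: "4 * \<bar>Q\<bar> < 4 * \<bar>Q\<bar> + 2 * P^2 + 1" using zero_le_power2[of P] by linarith
  have k2: "2 * P^2 < 4 * \<bar>Q\<bar> + 2 * P^2 + 1" using abs_ge_zero[of Q] by linarith
  have b1: "4 * d * \<bar>Q\<bar> < 1" unfolding d_def using dd k1 by (simp add: field_simps)
  have b2: "2 * d * P^2 < 1" unfolding d_def using dd k2 by (simp add: field_simps)
  have dle: "d \<le> 1" unfolding d_def using dd k2 by (simp add: field_simps)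
  have "2 * d^2 * P^2 = d * (2 * d * P^2)" by (simp add: power2_eq_square)
  also have "\<dots> \<le> 2 * d * P^2" by (rule mult_left_le_one_le) (use dpos dle in auto)
  finally have "2 * d^2 * P^2 < 1" using b2 by linarith
  moreover have "4 * d * Q \<ge> - (4 * d * \<bar>Q\<bar>)" proof -
    have "- \<bar>Q\<bar> \<le> Q" by simp
    then have "(4*d) * (- \<bar>Q\<bar>) \<le> (4*d) * Q" using dpos by (intro mult_left_mono) auto
    then show ?thesis by simp
  qed
  ultimately have pos: "2 + 4 * d * Q - 2 * d^2 * P^2 > 0" using b1 by linarith
  have num: "4 * t^2 * Q + 2 * t * (1 - t^2) * P = d * P^2 * (2 + 4 * d * Q - 2 * d^2 * P^2)"
    unfolding t_def by (simp add: algebra_simps power2_eq_square power3_eq_cube)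
  have "d * P^2 > 0" using dpos P by simp
  then have "4 * t^2 * Q + 2 * t * (1 - t^2) * P > 0" unfolding num using pos by simp
  then have "s^2 * Q + a * s * P > 0" unfolding eq using den by simp
  with H[OF as] show False by simp
qed

lemma Re_ofreal_mult: "Re (complex_of_real r * z) = r * Re z" by simp

lemma stationary:
  assumes x: "orthonormal_family n x" and jk: "j < n" "k < n" "j \<noteq> k"
    and max: "\<And>y. orthonormal_family n y \<Longrightarrow>
      Re (cnj u * (\<Sum>l<n. complex_of_real (c l) * quad_form n A (y l)))
      \<le> Re (cnj u * (\<Sum>l<n. complex_of_real (c l) * quad_form n A (x l)))"
    and w: "cnj w * w = 1"
  shows "Re (cnj u * (complex_of_real (c j - c k) * (w * bf n A (x j) (x k) + cnj w * bf n A (x k) (x j)))) = 0"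
proof -
  define S where "S = (\<Sum>l<n. complex_of_real (c l) * quad_form n A (x l))"
  define V where "V = complex_of_real (c j - c k) * (bf n A (x k) (x k) - bf n A (x j) (x j))"
  define E where "E = complex_of_real (c j - c k) * (w * bf n A (x j) (x k) + cnj w * bf n A (x k) (x j))"
  have "Re (cnj u * E) = 0"
  proof (rule real_stat)
    fix a s :: real assume as: "a^2 + s^2 = 1"
    have ineq: "Re (cnj u * (S + complex_of_real (c j - c k) * (complex_of_real (s^2) * (bf n A (x k) (x k) - bf n A (x j) (x j))
         + complex_of_real (a*s) * (w * bf n A (x j) (x k) + cnj w * bf n A (x k) (x j))))) \<le> Re (cnj u * S)"
      using max[OF rot_orth[OF x jk as w]] unfolding rot_value[OF jk as w] S_def .
    have eq: "cnj u * (S + complex_of_real (c j - c k) * (complex_of_real (s^2) * (bf n A (x k) (x k) - bf n A (x j) (x j))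
         + complex_of_real (a*s) * (w * bf n A (x j) (x k) + cnj w * bf n A (x k) (x j))))
       = cnj u * S + complex_of_real (s^2) * (cnj u * V) + complex_of_real (a*s) * (cnj u * E)"
      unfolding V_def E_def by (simp add: algebra_simps)
    have ineq2: "Re (cnj u * S + complex_of_real (s^2) * (cnj u * V) + complex_of_real (a*s) * (cnj u * E)) \<le> Re (cnj u * S)"
      using ineq unfolding eq .
    have "Re (cnj u * S + complex_of_real (s^2) * (cnj u * V) + complex_of_real (a*s) * (cnj u * E))
      = Re (cnj u * S) + s^2 * Re (cnj u * V) + (a*s) * Re (cnj u * E)"
      by (simp only: plus_complex.sel Re_ofreal_mult)
    then show "s^2 * Re (cnj u * V) + a * s * Re (cnj u * E) \<le> 0" using ineq2 by simp
  qed
  then show ?thesis unfolding E_def .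
qed

lemma two_dirs:
  assumes "Im (cnj u1 * u2) \<noteq> 0" "Re (cnj u1 * d) = 0" "Re (cnj u2 * d) = 0"
  shows "d = 0"
proof -
  have a: "Re u1 * Re d + Im u1 * Im d = 0" "Re u2 * Re d + Im u2 * Im d = 0"
    using assms(2,3) by simp_all
  have det: "Re u1 * Im u2 - Im u1 * Re u2 \<noteq> 0" using assms(1) by simp
  have "(Re u1 * Im u2 - Im u1 * Re u2) * Re d = Im u2 * (Re u1 * Re d + Im u1 * Im d) - Im u1 * (Re u2 * Re d + Im u2 * Im d)"
    by (simp add: algebra_simps)
  then have "(Re u1 * Im u2 - Im u1 * Re u2) * Re d = 0" using a by simp
  then have r: "Re d = 0" using det by simp
  have "(Re u1 * Im u2 - Im u1 * Re u2) * Im d = Re u1 * (Re u2 * Re d + Im u2 * Im d) - Re u2 * (Re u1 * Re d + Im u1 * Im d)"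
    by (simp add: algebra_simps)
  then have "(Re u1 * Im u2 - Im u1 * Re u2) * Im d = 0" using a by simp
  then have i: "Im d = 0" using det by simp
  show ?thesis using r i by (simp add: complex_eq_iff)
qed

lemma block_zero:
  assumes x: "orthonormal_family n x" and jk: "j < n" "k < n" and cjk: "c j \<noteq> c k"
    and u: "Im (cnj u1 * u2) \<noteq> 0"
    and max1: "\<And>y. orthonormal_family n y \<Longrightarrow>
      Re (cnj u1 * (\<Sum>l<n. complex_of_real (c l) * quad_form n A (y l)))
      \<le> Re (cnj u1 * (\<Sum>l<n. complex_of_real (c l) * quad_form n A (x l)))"
    and max2: "\<And>y. orthonormal_family n y \<Longrightarrow>
      Re (cnj u2 * (\<Sum>l<n. complex_of_real (c l) * quad_form n A (y l)))
      \<le> Re (cnj u2 * (\<Sum>l<n. complex_of_real (c l) * quad_form n A (x l)))"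
  shows "bf n A (x j) (x k) = 0"
proof -
  have jk': "j \<noteq> k" using cjk by auto
  have w1: "cnj 1 * (1::complex) = 1" by simp
  have wi: "cnj \<i> * \<i> = 1" by simp
  have z1: "complex_of_real (c j - c k) * (1 * bf n A (x j) (x k) + cnj 1 * bf n A (x k) (x j)) = 0"
    by (rule two_dirs[OF u stationary[OF x jk jk' max1 w1] stationary[OF x jk jk' max2 w1]])
  have z2: "complex_of_real (c j - c k) * (\<i> * bf n A (x j) (x k) + cnj \<i> * bf n A (x k) (x j)) = 0"
    by (rule two_dirs[OF u stationary[OF x jk jk' max1 wi] stationary[OF x jk jk' max2 wi]])
  have ne: "complex_of_real (c j - c k) \<noteq> 0" using cjk by simp
  have e1: "bf n A (x j) (x k) + bf n A (x k) (x j) = 0" using z1 ne by simp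
  have "\<i> * bf n A (x j) (x k) + cnj \<i> * bf n A (x k) (x j) = \<i> * (bf n A (x j) (x k) - bf n A (x k) (x j))"
    by (simp add: algebra_simps)
  then have e2: "\<i> * (bf n A (x j) (x k) - bf n A (x k) (x j)) = 0" using z2 ne by simp
  then have "bf n A (x j) (x k) - bf n A (x k) (x j) = 0" by simp
  moreover have "2 * bf n A (x j) (x k) = (bf n A (x j) (x k) + bf n A (x k) (x j)) + (bf n A (x j) (x k) - bf n A (x k) (x j))"
    by simp
  ultimately show ?thesis using e1 by simp
qed

lemma parallel_scale:
  assumes u1: "u1 \<noteq> 0" and u2: "u2 \<noteq> 0" and im: "Im (cnj u1 * u2) = 0"
  shows "\<exists>r::real. r \<noteq> 0 \<and> (\<forall>z. Re (cnj u2 * z) = r * Re (cnj u1 * z))"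
proof -
  define a where "a = Re u1" define b where "b = Im u1"
  define e where "e = Re u2" define f where "f = Im u2"
  have ab: "a^2 + b^2 > 0" using u1 unfolding a_def b_def
    by (metis complex_eq_iff sum_power2_gt_zero_iff zero_complex.simps)
  have imf: "a * f - b * e = 0" using im unfolding a_def b_def e_def f_def by simp
  define r where "r = (a * e + b * f) / (a^2 + b^2)"
  have ra: "r * a = e"
  proof -
    have "(a * e + b * f) * a = e * (a^2 + b^2)"
    proof -
      have "(a * e + b * f) * a = a*a*e + b * (a * f)" by (simp add: algebra_simps)
      also have "a * f = b * e" using imf by simp
      finally show ?thesis by (simp add: algebra_simps power2_eq_square)
    qed
    then have "r * a = (e * (a^2 + b^2)) / (a^2 + b^2)" unfolding r_def by simp
    moreover have "a^2 + b^2 \<noteq> 0" using ab by linarith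
    ultimately show ?thesis by (metis nonzero_mult_div_cancel_right)
  qed
  have rb: "r * b = f"
  proof -
    have "(a * e + b * f) * b = f * (a^2 + b^2)"
    proof -
      have "(a * e + b * f) * b = a * (b * e) + b*b*f" by (simp add: algebra_simps)
      also have "b * e = a * f" using imf by simp
      finally show ?thesis by (simp add: algebra_simps power2_eq_square)
    qed
    then have "r * b = (f * (a^2 + b^2)) / (a^2 + b^2)" unfolding r_def by simp
    moreover have "a^2 + b^2 \<noteq> 0" using ab by linarith
    ultimately show ?thesis by (metis nonzero_mult_div_cancel_right)
  qed
  have "r \<noteq> 0"
  proof
    assume "r = 0" then have "e = 0" "f = 0" using ra rb by auto
    then show False using u2 unfolding e_def f_def by (simp add: complex_eq_iff)
  qed
  moreover have "\<forall>z. Re (cnj u2 * z) = r * Re (cnj u1 * z)"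
  proof
    fix z
    have "Re (cnj u2 * z) = e * Re z + f * Im z" unfolding e_def f_def by simp
    also have "\<dots> = r * (a * Re z + b * Im z)" unfolding ra[symmetric] rb[symmetric] by (simp add: algebra_simps)
    also have "\<dots> = r * Re (cnj u1 * z)" unfolding a_def b_def by simp
    finally show "Re (cnj u2 * z) = r * Re (cnj u1 * z)" .
  qed
  ultimately show ?thesis by blast
qed

lemma sharp_dirs:
  assumes "sharp_point S \<alpha>"
  shows "\<exists>u1 u2. Im (cnj u1 * u2) \<noteq> 0 \<and> (\<forall>z\<in>S. Re (cnj u1 * z) \<le> Re (cnj u1 * \<alpha>))
           \<and> (\<forall>z\<in>S. Re (cnj u2 * z) \<le> Re (cnj u2 * \<alpha>))"
proof -
  obtain L1 L2 where ne: "L1 \<noteq> L2" and s1: "supporting_line_at S \<alpha> L1" and s2: "supporting_line_at S \<alpha> L2"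
    using assms unfolding sharp_point_def by blast
  obtain u1 t1 where u1: "u1 \<noteq> 0" "L1 = {z. Re (cnj u1 * z) = t1}" "\<forall>z\<in>S. Re (cnj u1 * z) \<le> t1" "\<alpha> \<in> L1"
    using s1 unfolding supporting_line_at_def by blast
  obtain u2 t2 where u2: "u2 \<noteq> 0" "L2 = {z. Re (cnj u2 * z) = t2}" "\<forall>z\<in>S. Re (cnj u2 * z) \<le> t2" "\<alpha> \<in> L2"
    using s2 unfolding supporting_line_at_def by blast
  have t1: "t1 = Re (cnj u1 * \<alpha>)" using u1 by auto
  have t2: "t2 = Re (cnj u2 * \<alpha>)" using u2 by auto
  have "Im (cnj u1 * u2) \<noteq> 0"
  proof
    assume "Im (cnj u1 * u2) = 0"
    then obtain r :: real where r: "r \<noteq> 0" "\<forall>z. Re (cnj u2 * z) = r * Re (cnj u1 * z)"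
      using parallel_scale[OF u1(1) u2(1)] by blast
    have "L1 = L2" unfolding u1(2) u2(2) t1 t2 using r by auto
    with ne show False by simp
  qed
  then show ?thesis using u1 u2 t1 t2 by blast
qed

lemma strict_mono_comp': "strict_mono (r1::nat\<Rightarrow>nat) \<Longrightarrow> strict_mono r2 \<Longrightarrow> strict_mono (r1 \<circ> r2)"
  by (simp add: strict_mono_def)

lemma real_bw:
  fixes f :: "nat \<Rightarrow> real"
  assumes "\<And>k. \<bar>f k\<bar> \<le> B"
  shows "\<exists>r l. strict_mono r \<and> (f \<circ> r) \<longlonglongrightarrow> l"
proof -
  obtain r where r: "strict_mono r" "monoseq (\<lambda>n. f (r n))" using seq_monosub[of f] by blast
  have "Bseq (\<lambda>n. f (r n))" by (rule BseqI'[of _ B]) (use assms in simp)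
  then have "convergent (\<lambda>n. f (r n))" using r(2) Bseq_monoseq_convergent by blast
  then show ?thesis using r(1) unfolding convergent_def comp_def by blast
qed

lemma complex_bw:
  fixes f :: "nat \<Rightarrow> complex"
  assumes B: "\<And>k. cmod (f k) \<le> B"
  shows "\<exists>r l. strict_mono r \<and> (f \<circ> r) \<longlonglongrightarrow> l"
proof -
  have "\<bar>Re (f k)\<bar> \<le> B" for k using B[of k] abs_Re_le_cmod[of "f k"] by linarith
  then obtain r1 l1 where r1: "strict_mono r1" "((\<lambda>k. Re (f k)) \<circ> r1) \<longlonglongrightarrow> l1"
    using real_bw[of "\<lambda>k. Re (f k)" B] by blast
  have "\<bar>Im (f (r1 k))\<bar> \<le> B" for k using B[of "r1 k"] abs_Im_le_cmod[of "f (r1 k)"] by linarith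
  then obtain r2 l2 where r2: "strict_mono r2" "((\<lambda>k. Im (f (r1 k))) \<circ> r2) \<longlonglongrightarrow> l2"
    using real_bw[of "\<lambda>k. Im (f (r1 k))" B] by blast
  have a: "(\<lambda>k. Re (f (r1 (r2 k)))) \<longlonglongrightarrow> l1"
    using LIMSEQ_subseq_LIMSEQ[OF r1(2) r2(1)] by (simp add: comp_def)
  have b: "(\<lambda>k. Im (f (r1 (r2 k)))) \<longlonglongrightarrow> l2" using r2(2) by (simp add: comp_def)
  have "(\<lambda>k. Complex (Re (f (r1 (r2 k)))) (Im (f (r1 (r2 k))))) \<longlonglongrightarrow> Complex l1 l2"
    by (rule tendsto_Complex[OF a b])
  then have "(f \<circ> (r1 \<circ> r2)) \<longlonglongrightarrow> Complex l1 l2" by (simp add: comp_def)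
  then show ?thesis using strict_mono_comp'[OF r1(1) r2(1)] by blast
qed

lemma finite_subseq:
  fixes X :: "nat \<Rightarrow> 'i \<Rightarrow> complex"
  assumes "finite F" and B: "\<And>k i. i \<in> F \<Longrightarrow> cmod (X k i) \<le> B"
  shows "\<exists>r L. strict_mono r \<and> (\<forall>i\<in>F. (\<lambda>k. X (r k) i) \<longlonglongrightarrow> L i)"
  using assms(1) B
proof (induction F rule: finite_induct)
  case empty
  then show ?case by (intro exI[of _ id]) (auto simp: strict_mono_def)
next
  case (insert a F)
  then obtain r L where r: "strict_mono r" "\<forall>i\<in>F. (\<lambda>k. X (r k) i) \<longlonglongrightarrow> L i" by blast
  have "cmod (X (r k) a) \<le> B" for k using insert.prems by simp
  then obtain r2 l where r2: "strict_mono r2" "((\<lambda>k. X (r k) a) \<circ> r2) \<longlonglongrightarrow> l"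
    using complex_bw[of "\<lambda>k. X (r k) a" B] by blast
  have "\<forall>i\<in>insert a F. (\<lambda>k. X ((r \<circ> r2) k) i) \<longlonglongrightarrow> (L(a := l)) i"
  proof
    fix i assume i: "i \<in> insert a F"
    show "(\<lambda>k. X ((r \<circ> r2) k) i) \<longlonglongrightarrow> (L(a := l)) i"
    proof (cases "i = a")
      case True then show ?thesis using r2(2) by (simp add: comp_def)
    next
      case False
      then have "i \<in> F" using i by simp
      then have "((\<lambda>k. X (r k) i) \<circ> r2) \<longlonglongrightarrow> L i" using LIMSEQ_subseq_LIMSEQ r(2) r2(1) by blast
      then show ?thesis using False by (simp add: comp_def)
    qed
  qed
  then show ?case using strict_mono_comp'[OF r(1) r2(1)] by blast
qed

lemma orth_bound:
  assumes x: "orthonormal_family n x" and j: "j < n" and i: "i < n"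
  shows "cmod (x j i) \<le> 1"
proof -
  have "(\<Sum>i<n. cnj (x j i) * x j i) = 1" using x j unfolding orthonormal_family_def by auto
  moreover have "cnj (x j i) * x j i = complex_of_real ((cmod (x j i))^2)" for i
    by (subst complex_norm_square) (simp add: mult.commute)
  ultimately have "complex_of_real (\<Sum>i<n. (cmod (x j i))^2) = 1" by simp
  then have s: "(\<Sum>i<n. (cmod (x j i))^2) = 1" using of_real_eq_1_iff by blast
  have "(cmod (x j i))^2 \<le> (\<Sum>i<n. (cmod (x j i))^2)"
    by (rule member_le_sum) (use i in auto)
  then have "(cmod (x j i))^2 \<le> 1" using s by simp
  then show ?thesis by (simp add: power_le_one_iff)
qed

lemma closure_in:
  assumes "\<alpha> \<in> closure (c_numerical_range n c A)"
  shows "\<exists>x. orthonormal_family n x \<and> \<alpha> = (\<Sum>j<n. complex_of_real (c j) * quad_form n A (x j))"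
proof -
  obtain z where z: "\<forall>k. z k \<in> c_numerical_range n c A" "z \<longlonglongrightarrow> \<alpha>"
    using assms unfolding closure_sequential by blast
  have "\<forall>k. \<exists>x. orthonormal_family n x \<and> z k = (\<Sum>j<n. complex_of_real (c j) * quad_form n A (x j))"
    using z(1) unfolding c_numerical_range_def by blast
  then obtain xs where xs: "\<And>k. orthonormal_family n (xs k)"
    "\<And>k. z k = (\<Sum>j<n. complex_of_real (c j) * quad_form n A (xs k j))" by metis
  define X where "X k p = xs k (fst p) (snd p)" for k p
  have "\<exists>r L. strict_mono r \<and> (\<forall>p\<in>{..<n}\<times>{..<n}. (\<lambda>k. X (r k) p) \<longlonglongrightarrow> L p)"
    by (rule finite_subseq[where B=1]) (auto simp: X_def intro!: orth_bound[OF xs(1)])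
  then obtain r L where r: "strict_mono r" and L: "\<forall>p\<in>{..<n}\<times>{..<n}. (\<lambda>k. X (r k) p) \<longlonglongrightarrow> L p"
    by blast
  define y where "y j i = L (j, i)" for j i
  have conv: "(\<lambda>k. xs (r k) j i) \<longlonglongrightarrow> y j i" if "j < n" "i < n" for j i
    using L that unfolding X_def y_def by auto
  have orth: "orthonormal_family n y"
    unfolding orthonormal_family_def
  proof (intro allI impI)
    fix j l assume j: "j < n" and l: "l < n"
    have "(\<lambda>k. \<Sum>i<n. cnj (xs (r k) j i) * xs (r k) l i) \<longlonglongrightarrow> (\<Sum>i<n. cnj (y j i) * y l i)"
      by (intro tendsto_sum tendsto_mult tendsto_cnj conv) (use j l in auto)
    moreover have "(\<lambda>k. \<Sum>i<n. cnj (xs (r k) j i) * xs (r k) l i) = (\<lambda>k. if j = l then 1 else 0)"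
      using xs(1) j l unfolding orthonormal_family_def by auto
    ultimately have "(\<lambda>k. if j = l then 1 else 0) \<longlonglongrightarrow> (\<Sum>i<n. cnj (y j i) * y l i)" by simp
    then show "(\<Sum>i<n. cnj (y j i) * y l i) = (if j = l then 1 else 0)"
      using LIMSEQ_unique tendsto_const by blast
  qed
  have "(\<lambda>k. \<Sum>j<n. complex_of_real (c j) * quad_form n A (xs (r k) j))
      \<longlonglongrightarrow> (\<Sum>j<n. complex_of_real (c j) * quad_form n A (y j))"
    unfolding quad_form_def
    by (intro tendsto_sum tendsto_mult tendsto_cnj tendsto_const conv) auto
  moreover have "(\<lambda>k. \<Sum>j<n. complex_of_real (c j) * quad_form n A (xs (r k) j)) = z \<circ> r"
    using xs(2) by (auto simp: comp_def)
  moreover have "(z \<circ> r) \<longlonglongrightarrow> \<alpha>" using LIMSEQ_subseq_LIMSEQ[OF z(2) r] .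
  ultimately have "\<alpha> = (\<Sum>j<n. complex_of_real (c j) * quad_form n A (y j))"
    using LIMSEQ_unique by metis
  then show ?thesis using orth by blast
qed

lemma family_matrix:
  assumes A: "A \<in> carrier_mat n n" and x: "orthonormal_family n x"
  shows "\<exists>B. B \<in> carrier_mat n n \<and> char_poly B = char_poly A \<and>
    (\<forall>j<n. \<forall>k<n. B $$ (j, k) = bf n A (x j) (x k))"
proof -
  define XM where "XM = mat n n (\<lambda>(i, j). x j i)"
  define XH where "XH = mat n n (\<lambda>(j, i). cnj (x j i))"
  have XM: "XM \<in> carrier_mat n n" and XH: "XH \<in> carrier_mat n n" unfolding XM_def XH_def by auto
  have HM: "XH * XM = 1\<^sub>m n"
  proof (rule eq_matI)
    fix j l assume j: "j < dim_row (1\<^sub>m n :: complex mat)" and l: "l < dim_col (1\<^sub>m n :: complex mat)"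
    have "(XH * XM) $$ (j, l) = (\<Sum>i<n. cnj (x j i) * x l i)"
      using j l unfolding XM_def XH_def by (simp add: scalar_prod_def atLeast0LessThan)
    also have "\<dots> = (if j = l then 1 else 0)" using x j l unfolding orthonormal_family_def by auto
    finally show "(XH * XM) $$ (j, l) = 1\<^sub>m n $$ (j, l)" using j l by simp
  qed (auto simp: XM_def XH_def)
  have MH: "XM * XH = 1\<^sub>m n" by (rule mat_mult_left_right_inverse[OF XH XM HM])
  define B where "B = XH * A * XM"
  have Bc: "B \<in> carrier_mat n n" unfolding B_def using XH A XM by auto
  have "similar_mat B A"
    by (rule similar_matI[of B A XH XM n]) (use Bc A XH XM HM MH B_def in auto)
  then have cp: "char_poly B = char_poly A" by (rule char_poly_similar)
  have ent: "B $$ (j, k) = bf n A (x j) (x k)" if j: "j < n" and k: "k < n" for j k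
  proof -
    have "B $$ (j, k) = (\<Sum>l<n. (\<Sum>i<n. cnj (x j i) * A $$ (i, l)) * x k l)"
      using j k A unfolding B_def XM_def XH_def by (simp add: scalar_prod_def atLeast0LessThan)
    also have "\<dots> = bf n A (x j) (x k)"
      unfolding bf_def sum_distrib_right by (rule sum.swap)
    finally show ?thesis .
  qed
  show ?thesis using Bc cp ent by blast
qed

lemma trace_comm_sq:
  fixes M N :: "complex mat"
  assumes "M \<in> carrier_mat n n" "N \<in> carrier_mat n n"
  shows "(\<Sum>i<n. (M * N) $$ (i, i)) = (\<Sum>i<n. (N * M) $$ (i, i))"
proof -
  have "(\<Sum>i<n. (M * N) $$ (i, i)) = (\<Sum>i<n. \<Sum>l<n. M $$ (i, l) * N $$ (l, i))"
    using assms by (simp add: scalar_prod_def atLeast0LessThan)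
  also have "\<dots> = (\<Sum>l<n. \<Sum>i<n. M $$ (i, l) * N $$ (l, i))" by (rule sum.swap)
  also have "\<dots> = (\<Sum>l<n. \<Sum>i<n. N $$ (l, i) * M $$ (i, l))" by (intro sum.cong refl) (rule mult.commute)
  also have "\<dots> = (\<Sum>i<n. (N * M) $$ (i, i))"
    using assms by (simp add: scalar_prod_def atLeast0LessThan)
  finally show ?thesis .
qed

lemma trace_similar:
  fixes P T Q :: "complex mat"
  assumes "P \<in> carrier_mat n n" "T \<in> carrier_mat n n" "Q \<in> carrier_mat n n" "Q * P = 1\<^sub>m n"
  shows "(\<Sum>i<n. (P * T * Q) $$ (i, i)) = (\<Sum>i<n. T $$ (i, i))"
proof -
  have "(\<Sum>i<n. (P * T * Q) $$ (i, i)) = (\<Sum>i<n. (Q * (P * T)) $$ (i, i))"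
    by (rule trace_comm_sq) (use assms in auto)
  also have "Q * (P * T) = (Q * P) * T" by (rule assoc_mult_mat[symmetric]) (use assms in auto)
  also have "\<dots> = T" unfolding assms(4) by (rule left_mult_one_mat[OF assms(2)])
  finally show ?thesis .
qed

lemma eig_trace:
  fixes B :: "complex mat"
  assumes B: "B \<in> carrier_mat n n"
  shows "\<exists>es. length es = n \<and> char_poly B = (\<Prod>a\<leftarrow>es. [:- a, 1:]) \<and> (\<Sum>i<n. B $$ (i, i)) = sum_list es"
proof -
  obtain es where es: "char_poly B = (\<Prod>a\<leftarrow>es. [:- a, 1:])" "length es = n"
    using char_poly_factorized[OF B] by blast
  obtain T P Q where sd: "schur_decomposition B es = (T, P, Q)" by (cases "schur_decomposition B es") auto
  from schur_decomposition[OF B es(1) sd] have sim: "similar_mat_wit B T P Q" and dg: "diag_mat T = es" by auto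
  from similar_mat_witD2[OF B sim] have T: "T \<in> carrier_mat n n" and P: "P \<in> carrier_mat n n"
    and Q: "Q \<in> carrier_mat n n" and QP: "Q * P = 1\<^sub>m n" and BT: "B = P * T * Q" by auto
  have "(\<Sum>i<n. B $$ (i, i)) = (\<Sum>i<n. T $$ (i, i))" unfolding BT by (rule trace_similar[OF P T Q QP])
  also have "\<dots> = sum_list (diag_mat T)" using T
    by (simp add: diag_mat_def sum_list_sum_nth atLeast0LessThan)
  finally show ?thesis using es dg by auto
qed

lemma perm_sum_delta:
  fixes a n :: nat
  assumes "a < n"
  shows "(\<Sum>r\<in>{0..<n}. (if r = a then 1 else 0) * (f r :: complex)) = f a"
proof -
  have "(\<Sum>r\<in>{0..<n}. (if r = a then 1 else 0) * (f r :: complex)) = (\<Sum>r\<in>{0..<n}. if r = a then f r else 0)"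
    by (intro sum.cong) auto
  also have "\<dots> = (if a \<in> {0..<n} then f a else 0)" by (rule sum.delta) simp
  also have "\<dots> = f a" using assms by simp
  finally show ?thesis .
qed

lemma perm_char_poly:
  fixes B :: "complex mat"
  assumes B: "B \<in> carrier_mat n n" and pi: "bij_betw \<pi> {..<n} {..<n}"
  shows "char_poly (mat n n (\<lambda>(i, j). B $$ (\<pi> i, \<pi> j))) = char_poly B"
proof -
  have pin: "\<pi> i < n" if "i < n" for i using pi that by (auto simp: bij_betw_def)
  have inj: "\<pi> i = \<pi> k \<longleftrightarrow> i = k" if "i < n" "k < n" for i k
    using pi that by (auto simp: bij_betw_def inj_on_def)
  define P :: "complex mat" where "P = mat n n (\<lambda>(i, j). if i = \<pi> j then 1 else 0)"
  define PT :: "complex mat" where "PT = mat n n (\<lambda>(i, j). if j = \<pi> i then 1 else 0)"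
  have Pc: "P \<in> carrier_mat n n" and PTc: "PT \<in> carrier_mat n n" unfolding P_def PT_def by auto
  have TP: "PT * P = 1\<^sub>m n"
  proof (rule eq_matI)
    fix i k assume i: "i < dim_row (1\<^sub>m n :: complex mat)" and k: "k < dim_col (1\<^sub>m n :: complex mat)"
    have "(PT * P) $$ (i, k) = (\<Sum>r\<in>{0..<n}. (if r = \<pi> i then 1 else 0) * (if r = \<pi> k then 1 else 0))"
      using i k unfolding P_def PT_def by (simp add: scalar_prod_def)
    also have "\<dots> = (if \<pi> i = \<pi> k then 1 else 0)" using pin i k by (subst perm_sum_delta) auto
    also have "\<dots> = 1\<^sub>m n $$ (i, k)" using inj i k by simp
    finally show "(PT * P) $$ (i, k) = 1\<^sub>m n $$ (i, k)" .
  qed (auto simp: P_def PT_def)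
  have PTt: "P * PT = 1\<^sub>m n" by (rule mat_mult_left_right_inverse[OF PTc Pc TP])
  have eq: "mat n n (\<lambda>(i, j). B $$ (\<pi> i, \<pi> j)) = PT * B * P"
  proof (rule eq_matI)
    fix i k assume i: "i < dim_row (PT * B * P)" and k: "k < dim_col (PT * B * P)"
    then have i': "i < n" and k': "k < n" using PTc Pc B by auto
    have r1: "(PT * B) $$ (i, l) = B $$ (\<pi> i, l)" if l: "l < n" for l
    proof -
      have "(PT * B) $$ (i, l) = (\<Sum>r\<in>{0..<n}. (if r = \<pi> i then 1 else 0) * B $$ (r, l))"
        using i' l B unfolding PT_def by (simp add: scalar_prod_def)
      also have "\<dots> = B $$ (\<pi> i, l)" using pin[OF i'] by (rule perm_sum_delta)
      finally show ?thesis .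
    qed
    have "(PT * B * P) $$ (i, k) = (\<Sum>l\<in>{0..<n}. (PT * B) $$ (i, l) * (if l = \<pi> k then 1 else 0))"
      using i' k' B PTc unfolding P_def by (simp add: scalar_prod_def)
    also have "\<dots> = (\<Sum>l\<in>{0..<n}. (if l = \<pi> k then 1 else 0) * B $$ (\<pi> i, l))"
      using r1 by (intro sum.cong) auto
    also have "\<dots> = B $$ (\<pi> i, \<pi> k)" using pin[OF k'] by (rule perm_sum_delta)
    finally show "mat n n (\<lambda>(i, j). B $$ (\<pi> i, \<pi> j)) $$ (i, k) = (PT * B * P) $$ (i, k)"
      using i' k' by simp
  qed (use PTc Pc B in auto)
  have "similar_mat (PT * B * P) B"
    by (rule similar_matI[of "PT * B * P" B PT P n]) (use PTc Pc B TP PTt in auto)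
  then show ?thesis unfolding eq by (rule char_poly_similar)
qed

lemma sort_perm:
  assumes I: "I \<subseteq> {..<n}"
  shows "\<exists>\<pi>. bij_betw \<pi> {..<n} {..<n} \<and> (\<forall>k<n. k < card I \<longleftrightarrow> \<pi> k \<in> I)"
proof -
  define m where "m = card I"
  have fI: "finite I" using I finite_subset by blast
  have mn: "m \<le> n" unfolding m_def using card_mono[OF _ I] by simp
  obtain f where f: "bij_betw f {0..<m} I" using ex_bij_betw_nat_finite[OF fI] unfolding m_def by blast
  define J where "J = {..<n} - I"
  have cJ: "card J = n - m" unfolding J_def m_def using I fI by (simp add: card_Diff_subset)
  obtain g where g: "bij_betw g {0..<n-m} J" using ex_bij_betw_nat_finite[of J] cJ unfolding J_def by auto
  define \<pi> where "\<pi> k = (if k < m then f k else g (k - m))" for k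
  have sh: "bij_betw (\<lambda>k. k - m) {m..<n} {0..<n-m}"
    by (rule bij_betw_byWitness[where f'="\<lambda>k. k + m"]) auto
  have b1: "bij_betw \<pi> {0..<m} I"
    using f by (rule bij_betw_cong[THEN iffD1, rotated]) (auto simp: \<pi>_def)
  have b2: "bij_betw \<pi> {m..<n} J"
  proof -
    have "bij_betw (g \<circ> (\<lambda>k. k - m)) {m..<n} J" by (rule bij_betw_trans[OF sh g])
    then show ?thesis by (rule bij_betw_cong[THEN iffD1, rotated]) (auto simp: \<pi>_def)
  qed
  have "bij_betw \<pi> ({0..<m} \<union> {m..<n}) (I \<union> J)"
    by (rule bij_betw_combine[OF b1 b2]) (auto simp: J_def)
  moreover have "{0..<m} \<union> {m..<n} = {..<n}" using mn by auto
  moreover have "I \<union> J = {..<n}" using I by (auto simp: J_def)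
  ultimately have bij: "bij_betw \<pi> {..<n} {..<n}" by simp
  have "k < m \<longleftrightarrow> \<pi> k \<in> I" if k: "k < n" for k
  proof
    assume "k < m" then show "\<pi> k \<in> I" using b1 by (auto simp: bij_betw_def)
  next
    assume "\<pi> k \<in> I"
    show "k < m"
    proof (rule ccontr)
      assume "\<not> k < m"
      then have "k \<in> {m..<n}" using k by auto
      then have "\<pi> k \<in> J" using b2 by (auto simp: bij_betw_def)
      with \<open>\<pi> k \<in> I\<close> show False by (auto simp: J_def)
    qed
  qed
  then show ?thesis using bij unfolding m_def by blast
qed

lemma sum_split_nat:
  fixes f :: "nat \<Rightarrow> 'a::comm_monoid_add"
  assumes "m \<le> n"
  shows "(\<Sum>k<n. f k) = (\<Sum>k<m. f k) + (\<Sum>k<n-m. f (m + k))"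
proof -
  obtain d where n: "n = m + d" using assms le_Suc_ex by blast
  have "(\<Sum>k<m + d. f k) = (\<Sum>k<m. f k) + (\<Sum>k<d. f (m + k))"
    by (induction d) (simp_all add: add.assoc)
  then show ?thesis using n by simp
qed

lemma LA:
  fixes B :: "complex mat" and c :: "nat \<Rightarrow> real"
  assumes "B \<in> carrier_mat n n" "\<forall>j<n. \<forall>k<n. c j \<noteq> c k \<longrightarrow> B $$ (j, k) = 0"
  shows "\<exists>ls \<sigma>. length ls = n \<and> char_poly B = (\<Prod>a\<leftarrow>ls. [:- a, 1:]) \<and> bij_betw \<sigma> {..<n} {..<n}
    \<and> (\<Sum>j<n. complex_of_real (c j) * B $$ (j, j)) = (\<Sum>j<n. complex_of_real (c j) * ls ! \<sigma> j)"
  using assms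
proof (induction n arbitrary: B c rule: less_induct)
  case (less n)
  note Bc = less.prems(1) and Bz = less.prems(2)
  show ?case
  proof (cases "n = 0")
    case True
    obtain ls where "char_poly B = (\<Prod>a\<leftarrow>ls. [:- a, 1:])" "length ls = n"
      using char_poly_factorized[OF Bc] by blast
    then show ?thesis using True by (intro exI[of _ ls] exI[of _ id]) (auto simp: bij_betw_def)
  next
    case False
    define \<gamma> where "\<gamma> = c 0"
    define I where "I = {j. j < n \<and> c j = \<gamma>}"
    define m where "m = card I"
    have I: "I \<subseteq> {..<n}" unfolding I_def by auto
    have fI: "finite I" using I finite_subset by blast
    have "0 \<in> I" using False unfolding I_def \<gamma>_def by auto
    then have m1: "1 \<le> m" unfolding m_def using fI card_0_eq by fastforce
    have mn: "m \<le> n" unfolding m_def using card_mono[OF _ I] by simp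
    obtain \<pi> where pi: "bij_betw \<pi> {..<n} {..<n}" and piI: "\<forall>k<n. k < m \<longleftrightarrow> \<pi> k \<in> I"
      using sort_perm[OF I] unfolding m_def by blast
    have pin: "\<pi> k < n" if "k < n" for k using pi that by (auto simp: bij_betw_def)
    have cpi1: "c (\<pi> k) = \<gamma>" if "k < m" for k
    proof -
      have "k < n" using that mn by simp
      then have "\<pi> k \<in> I" using piI that by blast
      then show ?thesis unfolding I_def by simp
    qed
    have cpi2: "c (\<pi> k) \<noteq> \<gamma>" if "m \<le> k" "k < n" for k using piI that pin unfolding I_def by auto
    define B' where "B' = mat n n (\<lambda>(i, j). B $$ (\<pi> i, \<pi> j))"
    define B1 where "B1 = mat m m (\<lambda>(i, j). B' $$ (i, j))"
    define B4 where "B4 = mat (n - m) (n - m) (\<lambda>(i, j). B' $$ (m + i, m + j))"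
    have B1c: "B1 \<in> carrier_mat m m" and B4c: "B4 \<in> carrier_mat (n - m) (n - m)"
      unfolding B1_def B4_def by auto
    have blk: "B' = four_block_mat B1 (0\<^sub>m m (n - m)) (0\<^sub>m (n - m) m) B4"
    proof (rule eq_matI)
      fix i j assume i: "i < dim_row (four_block_mat B1 (0\<^sub>m m (n - m)) (0\<^sub>m (n - m) m) B4)"
        and j: "j < dim_col (four_block_mat B1 (0\<^sub>m m (n - m)) (0\<^sub>m (n - m) m) B4)"
      then have i': "i < n" and j': "j < n" using B1c B4c mn by auto
      show "B' $$ (i, j) = four_block_mat B1 (0\<^sub>m m (n - m)) (0\<^sub>m (n - m) m) B4 $$ (i, j)"
      proof (cases "i < m \<longleftrightarrow> j < m")
        case True
        then show ?thesis using i' j' mn unfolding B'_def B1_def B4_def by auto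
      next
        case False
        then have "c (\<pi> i) \<noteq> c (\<pi> j)" using cpi1 cpi2 i' j' by (metis not_le)
        then have "B $$ (\<pi> i, \<pi> j) = 0" using Bz pin i' j' by blast
        then show ?thesis using False i' j' mn unfolding B'_def B1_def B4_def by auto
      qed
    qed (use B1c B4c mn in \<open>auto simp: B'_def\<close>)
    have cpB: "char_poly B = char_poly B'" unfolding B'_def using perm_char_poly[OF Bc pi] by simp
    have cp: "char_poly B' = char_poly B1 * char_poly B4"
      by (rule char_poly_0_block[OF blk]) (use char_poly_factorized[OF B1c] char_poly_factorized[OF B4c] B1c B4c in auto)
    define c' where "c' k = c (\<pi> (m + k))" for k
    have lt: "n - m < n" using m1 False by simp
    have B4z: "\<forall>j<n - m. \<forall>k<n - m. c' j \<noteq> c' k \<longrightarrow> B4 $$ (j, k) = 0"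
      using Bz pin unfolding B4_def B'_def c'_def by auto
    obtain ls4 \<sigma>4 where ls4: "length ls4 = n - m" "char_poly B4 = (\<Prod>a\<leftarrow>ls4. [:- a, 1:])"
      "bij_betw \<sigma>4 {..<n - m} {..<n - m}"
      "(\<Sum>j<n - m. complex_of_real (c' j) * B4 $$ (j, j)) = (\<Sum>j<n - m. complex_of_real (c' j) * ls4 ! \<sigma>4 j)"
      using less.IH[OF lt B4c B4z] by blast
    obtain es1 where es1: "length es1 = m" "char_poly B1 = (\<Prod>a\<leftarrow>es1. [:- a, 1:])"
      "(\<Sum>i<m. B1 $$ (i, i)) = sum_list es1"
      using eig_trace[OF B1c] by blast
    define ls where "ls = es1 @ ls4"
    define \<rho> where "\<rho> k = (if k < m then k else m + \<sigma>4 (k - m))" for k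
    have rho: "bij_betw \<rho> {..<n} {..<n}"
    proof -
      have b1: "bij_betw \<rho> {0..<m} {0..<m}" by (rule bij_betw_cong[THEN iffD1, rotated, OF bij_betw_id]) (auto simp: \<rho>_def)
      have sh: "bij_betw (\<lambda>k. k - m) {m..<n} {..<n-m}"
        by (rule bij_betw_byWitness[where f'="\<lambda>k. k + m"]) auto
      have sh2: "bij_betw (\<lambda>k. m + k) {..<n-m} {m..<n}"
        by (rule bij_betw_byWitness[where f'="\<lambda>k. k - m"]) auto
      have "bij_betw ((\<lambda>k. m + k) \<circ> (\<sigma>4 \<circ> (\<lambda>k. k - m))) {m..<n} {m..<n}"
        by (rule bij_betw_trans[OF bij_betw_trans[OF sh ls4(3)] sh2])
      then have b2: "bij_betw \<rho> {m..<n} {m..<n}"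
        by (rule bij_betw_cong[THEN iffD1, rotated]) (auto simp: \<rho>_def)
      have "bij_betw \<rho> ({0..<m} \<union> {m..<n}) ({0..<m} \<union> {m..<n})"
        by (rule bij_betw_combine[OF b1 b2]) auto
      moreover have "{0..<m} \<union> {m..<n} = {..<n}" using mn by auto
      ultimately show ?thesis by simp
    qed
    define \<sigma> where "\<sigma> = \<rho> \<circ> inv_into {..<n} \<pi>"
    have sig: "bij_betw \<sigma> {..<n} {..<n}"
      unfolding \<sigma>_def by (rule bij_betw_trans[OF bij_betw_inv_into[OF pi] rho])
    have sigpi: "\<sigma> (\<pi> k) = \<rho> k" if "k < n" for k
      using that pi unfolding \<sigma>_def by (simp add: bij_betw_def inv_into_f_f)
    have lsl: "length ls = n" using es1(1) ls4(1) mn unfolding ls_def by simp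
    have cpls: "char_poly B = (\<Prod>a\<leftarrow>ls. [:- a, 1:])"
      unfolding cpB cp es1(2) ls4(2) ls_def by simp
    have lhs: "(\<Sum>j<n. complex_of_real (c j) * B $$ (j, j))
      = complex_of_real \<gamma> * sum_list es1 + (\<Sum>k<n - m. complex_of_real (c' k) * B4 $$ (k, k))"
    proof -
      have "(\<Sum>j<n. complex_of_real (c j) * B $$ (j, j)) = (\<Sum>k<n. complex_of_real (c (\<pi> k)) * B $$ (\<pi> k, \<pi> k))"
        using sum.reindex_bij_betw[OF pi, of "\<lambda>j. complex_of_real (c j) * B $$ (j, j)"] by simp
      also have "\<dots> = (\<Sum>k<m. complex_of_real (c (\<pi> k)) * B $$ (\<pi> k, \<pi> k))
          + (\<Sum>k<n - m. complex_of_real (c (\<pi> (m + k))) * B $$ (\<pi> (m + k), \<pi> (m + k)))"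
        by (rule sum_split_nat[OF mn])
      also have "(\<Sum>k<m. complex_of_real (c (\<pi> k)) * B $$ (\<pi> k, \<pi> k)) = (\<Sum>k<m. complex_of_real \<gamma> * B1 $$ (k, k))"
        using cpi1 mn unfolding B1_def B'_def by (intro sum.cong) auto
      also have "\<dots> = complex_of_real \<gamma> * sum_list es1" unfolding es1(3)[symmetric] by (rule sum_distrib_left[symmetric])
      also have "(\<Sum>k<n - m. complex_of_real (c (\<pi> (m + k))) * B $$ (\<pi> (m + k), \<pi> (m + k)))
          = (\<Sum>k<n - m. complex_of_real (c' k) * B4 $$ (k, k))"
        unfolding B4_def B'_def c'_def by (intro sum.cong) auto
      finally show ?thesis .
    qed
    have rhs: "(\<Sum>j<n. complex_of_real (c j) * ls ! \<sigma> j)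
      = complex_of_real \<gamma> * sum_list es1 + (\<Sum>k<n - m. complex_of_real (c' k) * ls4 ! \<sigma>4 k)"
    proof -
      have "(\<Sum>j<n. complex_of_real (c j) * ls ! \<sigma> j) = (\<Sum>k<n. complex_of_real (c (\<pi> k)) * ls ! \<sigma> (\<pi> k))"
        using sum.reindex_bij_betw[OF pi, of "\<lambda>j. complex_of_real (c j) * ls ! \<sigma> j"] by simp
      also have "\<dots> = (\<Sum>k<n. complex_of_real (c (\<pi> k)) * ls ! \<rho> k)"
        using sigpi by (intro sum.cong) auto
      also have "\<dots> = (\<Sum>k<m. complex_of_real (c (\<pi> k)) * ls ! \<rho> k)
          + (\<Sum>k<n - m. complex_of_real (c (\<pi> (m + k))) * ls ! \<rho> (m + k))"
        by (rule sum_split_nat[OF mn])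
      also have "(\<Sum>k<m. complex_of_real (c (\<pi> k)) * ls ! \<rho> k) = (\<Sum>k<m. complex_of_real \<gamma> * es1 ! k)"
        using cpi1 es1(1) unfolding \<rho>_def ls_def by (intro sum.cong) (auto simp: nth_append)
      also have "\<dots> = complex_of_real \<gamma> * sum_list es1"
        using es1(1) by (simp add: sum_distrib_left sum_list_sum_nth atLeast0LessThan)
      also have "(\<Sum>k<n - m. complex_of_real (c (\<pi> (m + k))) * ls ! \<rho> (m + k))
          = (\<Sum>k<n - m. complex_of_real (c' k) * ls4 ! \<sigma>4 k)"
        using es1(1) unfolding \<rho>_def ls_def c'_def by (intro sum.cong) (auto simp: nth_append)
      finally show ?thesis .
    qed
    have "(\<Sum>j<n. complex_of_real (c j) * B $$ (j, j)) = (\<Sum>j<n. complex_of_real (c j) * ls ! \<sigma> j)"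
      unfolding lhs rhs ls4(4) ..
    then show ?thesis using lsl cpls sig by blast
  qed
qed

theorem mainTheorem16:
  fixes A :: "complex mat" and n :: nat and c :: "nat \<Rightarrow> real" and \<alpha> :: complex
  assumes "A \<in> carrier_mat n n"
    and "sharp_point (c_numerical_range n c A) \<alpha>"
  shows "c_value n c A \<alpha>"
proof -
  note Ac = assms(1)
  let ?W = "c_numerical_range n c A"
  have "\<alpha> \<in> closure ?W" using assms(2) unfolding sharp_point_def frontier_def by blast
  then obtain x where x: "orthonormal_family n x"
    and ax: "\<alpha> = (\<Sum>j<n. complex_of_real (c j) * quad_form n A (x j))"
    using closure_in by blast
  obtain u1 u2 where u: "Im (cnj u1 * u2) \<noteq> 0"
    and s1: "\<forall>z\<in>?W. Re (cnj u1 * z) \<le> Re (cnj u1 * \<alpha>)"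
    and s2: "\<forall>z\<in>?W. Re (cnj u2 * z) \<le> Re (cnj u2 * \<alpha>)"
    using sharp_dirs[OF assms(2)] by blast
  have inW: "(\<Sum>l<n. complex_of_real (c l) * quad_form n A (y l)) \<in> ?W" if "orthonormal_family n y" for y
    using that unfolding c_numerical_range_def by blast
  have bz: "\<forall>j<n. \<forall>k<n. c j \<noteq> c k \<longrightarrow> bf n A (x j) (x k) = 0"
  proof (intro allI impI)
    fix j k assume j: "j < n" and k: "k < n" and cjk: "c j \<noteq> c k"
    show "bf n A (x j) (x k) = 0"
    proof (rule block_zero[OF x j k cjk u])
      fix y assume "orthonormal_family n y"
      then show "Re (cnj u1 * (\<Sum>l<n. complex_of_real (c l) * quad_form n A (y l)))
        \<le> Re (cnj u1 * (\<Sum>l<n. complex_of_real (c l) * quad_form n A (x l)))"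
        using s1 inW[OF \<open>orthonormal_family n y\<close>] unfolding ax by blast
    next
      fix y assume "orthonormal_family n y"
      then show "Re (cnj u2 * (\<Sum>l<n. complex_of_real (c l) * quad_form n A (y l)))
        \<le> Re (cnj u2 * (\<Sum>l<n. complex_of_real (c l) * quad_form n A (x l)))"
        using s2 inW[OF \<open>orthonormal_family n y\<close>] unfolding ax by blast
    qed
  qed
  obtain B where Bc: "B \<in> carrier_mat n n" and cpB: "char_poly B = char_poly A"
    and Be: "\<forall>j<n. \<forall>k<n. B $$ (j, k) = bf n A (x j) (x k)"
    using family_matrix[OF Ac x] by blast
  have Bz: "\<forall>j<n. \<forall>k<n. c j \<noteq> c k \<longrightarrow> B $$ (j, k) = 0" using bz Be by simp
  obtain ls \<sigma> where ls: "length ls = n" "char_poly B = (\<Prod>a\<leftarrow>ls. [:- a, 1:])"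
    and sig: "bij_betw \<sigma> {..<n} {..<n}"
    and sums: "(\<Sum>j<n. complex_of_real (c j) * B $$ (j, j)) = (\<Sum>j<n. complex_of_real (c j) * ls ! \<sigma> j)"
    using LA[OF Bc Bz] by blast
  define S where "S = {i. i < n \<and> c i \<noteq> 0}"
  have "\<alpha> = (\<Sum>j<n. complex_of_real (c j) * B $$ (j, j))"
    unfolding ax using Be by (simp add: qf_bf)
  also have "\<dots> = (\<Sum>j<n. complex_of_real (c j) * ls ! \<sigma> j)" by (rule sums)
  also have "\<dots> = (\<Sum>i\<in>S. complex_of_real (c i) * ls ! \<sigma> i)"
    by (rule sum.mono_neutral_right) (auto simp: S_def)
  finally have aS: "\<alpha> = (\<Sum>i\<in>S. complex_of_real (c i) * ls ! \<sigma> i)" .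
  have inj: "inj_on \<sigma> S" using sig unfolding bij_betw_def S_def by (auto intro: inj_on_subset)
  have img: "\<sigma> ` S \<subseteq> {..<n}" using sig unfolding bij_betw_def S_def by auto
  show ?thesis unfolding c_value_def
    using ls cpB inj img aS unfolding S_def by auto
qed

end
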